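(* Consider the SDP pair and ADMM iteration of the context, with $\mathcal A$ surjective and nonempty KKT set, and suppose the ADMM iterates converge to a KKT point $(X_\star,y_\star,S_\star)$ with $\operatorname{rank}X_\star+\operatorname{rank}S_\star=n$. Then there exists $\bar k_{\mathrm{ID}}\in\mathbb N$ such that for every integer $k\ge\bar k_{\mathrm{ID}}$, $\operatorname{rank}X^{(k)}=\operatorname{rank}X_\star$ and $\operatorname{rank}S^{(k)}=\operatorname{rank}S_\star$.
   Context: $\mathbb S^n$: real symmetric matrices; $\Pi_{\mathbb S^n_+}$ the Frobenius projection onto the PSD cone. SDP pair: minimize $\langle C,X\rangle$ s.t. $\mathcal AX=b$, $X\succeq0$; maximize $b^\top y$ s.t. $\mathcal A^*y+S=C$, $S\succeq0$, where $C,A_1,\dots,A_m\in\mathbb S^n$, $\mathcal AX=(\operatorname{tr}(A_iX))_i$, $\mathcal A^*y=\sum y_iA_i$. KKT point: $\mathcal AX=b$, $\mathcal A^*y+S=C$, $\operatorname{tr}(XS)=0$, $X,S\succeq0$. With $\sigma>0$ and $\mathcal P=\mathcal A^*(\mathcal A\mathcal A^* )^{-1}\mathcal A$, ADMM (one-step form) iterates $Z^{(k+1)}=\mathcal P(-2\Pi_{\mathbb S^n_+}(Z^{(k)})+Z^{(k)})+\Pi_{\mathbb S^n_+}(Z^{(k)})+\mathcal A^*(\mathcal A\mathcal A^* )^{-1}b+\sigma\mathcal PC-\sigma C$ and $X^{(k)}=\Pi_{\mathbb S^n_+}(Z^{(k)})$, $S^{(k)}=\sigma^{-1}\Pi_{\mathbb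 S^n_+}(-Z^{(k)})$; convergence of the iterates to $(X_\star,y_\star,S_\star)$ means $Z^{(k)}\to X_\star-\sigma S_\star$ (equivalently, the classical three-step ADMM iterates converge to that KKT point). *)

theory Defs
  imports "HOL-Analysis.Analysis"
begin

(* Matrices in S^n are real^'n^'n with transpose X = X.
   The norm on real^'n^'n is the Frobenius norm. *)

definition sym_mat :: "real^'n^'n \<Rightarrow> bool" where
  "sym_mat X \<longleftrightarrow> transpose X = X"

definition psd :: "real^'n^'n \<Rightarrow> bool" where
  "psd X \<longleftrightarrow> sym_mat X \<and> (\<forall>v. 0 \<le> v \<bullet> (X *v v))"

(* Frobenius inner product <X,Y> = tr(X Y) (for symmetric X) *)
definition frob :: "real^'n^'n \<Rightarrow> real^'n^'n \<Rightarrow> real" where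
  "frob X Y = trace (transpose X ** Y)"

(* Frobenius projection onto the PSD cone: the unique nearest PSD matrix *)
definition psd_proj :: "real^'n^'n \<Rightarrow> real^'n^'n" where
  "psd_proj Z = (THE X. psd X \<and> (\<forall>Y. psd Y \<longrightarrow> norm (Z - X) \<le> norm (Z - Y)))"

(* the linear map \<A>X = (tr(A_i X))_i and its adjoint A-star *)
definition Aop :: "('m::finite \<Rightarrow> real^'n^'n) \<Rightarrow> real^'n^'n \<Rightarrow> real^'m" where
  "Aop A X = (\<chi> i. frob (A i) X)"

definition Aadj :: "('m::finite \<Rightarrow> real^'n^'n) \<Rightarrow> real^'m \<Rightarrow> real^'n^'n" where
  "Aadj A y = (\<Sum>i\<in>UNIV. (y $ i) *\<^sub>R A i)"

(* Gram matrix of A (matrix of A A-adjoint) and its inverse *)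
definition AAt :: "('m::finite \<Rightarrow> real^'n^'n) \<Rightarrow> real^'m^'m" where
  "AAt A = (\<chi> i j. frob (A i) (A j))"

definition AAt_inv :: "('m::finite \<Rightarrow> real^'n^'n) \<Rightarrow> real^'m \<Rightarrow> real^'m" where
  "AAt_inv A b = matrix_inv (AAt A) *v b"

(* P = Aadj o inverse Gram o Aop *)
definition Pproj :: "('m::finite \<Rightarrow> real^'n^'n) \<Rightarrow> real^'n^'n \<Rightarrow> real^'n^'n" where
  "Pproj A X = Aadj A (AAt_inv A (Aop A X))"

definition is_KKT ::
  "('m::finite \<Rightarrow> real^'n^'n) \<Rightarrow> real^'m \<Rightarrow> real^'n^'n \<Rightarrow>
   real^'n^'n \<Rightarrow> real^'m \<Rightarrow> real^'n^'n \<Rightarrow> bool" where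
  "is_KKT A b C X y S \<longleftrightarrow> Aop A X = b \<and> Aadj A y + S = C \<and> trace (X ** S) = 0
      \<and> psd X \<and> psd S"

(* one-step ADMM map *)
definition admm_step ::
  "('m::finite \<Rightarrow> real^'n^'n) \<Rightarrow> real^'m \<Rightarrow> real^'n^'n \<Rightarrow> real \<Rightarrow> real^'n^'n \<Rightarrow> real^'n^'n" where
  "admm_step A b C \<sigma> Z = Pproj A (Z - 2 *\<^sub>R psd_proj Z) + psd_proj Z
      + Aadj A (AAt_inv A b) + \<sigma> *\<^sub>R Pproj A C - \<sigma> *\<^sub>R C"

definition admm_X :: "real^'n^'n \<Rightarrow> real^'n^'n" where
  "admm_X Z = psd_proj Z"

definition admm_S :: "real \<Rightarrow> real^'n^'n \<Rightarrow> real^'n^'n" where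
  "admm_S \<sigma> Z = inverse \<sigma> *\<^sub>R psd_proj (- Z)"

end

theory Submission
  imports Defs
begin


lemma sym_mat_iff: "sym_mat (X::real^'n^'n) \<longleftrightarrow> (\<forall>i j. X$i$j = X$j$i)"
  unfolding sym_mat_def transpose_def vec_eq_iff by auto

lemma sym_inner: "sym_mat S \<Longrightarrow> x \<bullet> (S *v y) = (S *v x) \<bullet> y"
  by (metis dot_lmul_matrix sym_mat_def transpose_matrix_vector)

lemma inner_mat: "(X::real^'n^'m) \<bullet> Y = (\<Sum>i\<in>UNIV. \<Sum>j\<in>UNIV. X$i$j * Y$i$j)"
  by (simp add: inner_vec_def inner_real_def)

definition outer :: "real^'n \<Rightarrow> real^'n \<Rightarrow> real^'n^'n" where
  "outer u v = (\<chi> i j. u$i * v$j)"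

lemma outer_inner: "(S::real^'n^'n) \<bullet> outer u u = u \<bullet> (S *v u)"
  by (simp add: inner_mat outer_def inner_vec_def matrix_vector_mult_def sum_distrib_left ac_simps)

lemma outer_mv: "outer u v *v x = (v \<bullet> x) *\<^sub>R u"
  by (simp add: outer_def inner_vec_def matrix_vector_mult_def vec_eq_iff sum_distrib_left ac_simps)

lemma mm_outer: "(S::real^'n^'n) ** outer u v = outer (S *v u) v"
  by (simp add: outer_def matrix_matrix_mult_def matrix_vector_mult_def vec_eq_iff sum_distrib_left ac_simps)

lemma sym_outer: "sym_mat (outer u u)"
  by (simp add: sym_mat_iff outer_def)

lemma trace_inner: "sym_mat S \<Longrightarrow> trace ((X::real^'n^'n) ** S) = X \<bullet> S"
  by (simp add: trace_def inner_mat matrix_matrix_mult_def sym_mat_iff)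



lemma psd_zero_quad:
  assumes "psd S" "x \<bullet> (S *v x) = 0"
  shows "S *v x = 0"
proof -
  define y where "y = S *v x"
  define a where "a = y \<bullet> y"
  define c where "c = y \<bullet> (S *v y)"
  have sy: "sym_mat S" and q: "\<And>v. 0 \<le> v \<bullet> (S *v v)" using assms(1) unfolding psd_def by auto
  have c0: "c \<ge> 0" unfolding c_def by (rule q)
  have a0: "a \<ge> 0" unfolding a_def by simp
  have xy: "x \<bullet> (S *v y) = a" unfolding a_def y_def using sym_inner[OF sy] by simp
  have exp: "(x + t *\<^sub>R y) \<bullet> (S *v (x + t *\<^sub>R y)) = 2*t*a + t^2 * c" for t
  proof -
    have "(x + t *\<^sub>R y) \<bullet> (S *v (x + t *\<^sub>R y)) = x \<bullet> (S *v x) + t * (x \<bullet> (S *v y)) + t * (y \<bullet> (S *v x)) + t*t*(y \<bullet> (S *v y))"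
      by (simp add: matrix_vector_right_distrib matrix_vector_mult_scaleR inner_add_left inner_add_right algebra_simps)
    also have "\<dots> = 2*t*a + t^2*c" using assms(2) xy unfolding c_def a_def y_def
      by (simp add: power2_eq_square)
    finally show ?thesis .
  qed
  define t where "t = - a / (c+1)"
  have h0: "0 \<le> 2*t*a + t^2 * c" using q[of "x + t *\<^sub>R y"] exp by simp
  have c1: "c + 1 > 0" using c0 by simp
  have td: "t*(c+1) = -a" using c1 by (simp add: t_def)
  have "(c+1)^2 * (2*t*a + t^2*c) = 2*(t*(c+1))*a*(c+1) + (t*(c+1))^2*c"
    by (simp add: algebra_simps power2_eq_square)
  also have "\<dots> = a^2 * (-c-2)" unfolding td by (simp add: algebra_simps power2_eq_square)
  finally have "(c+1)^2 * (2*t*a + t^2*c) = a^2 * (-c-2)" .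
  moreover have "(c+1)^2 * (2*t*a + t^2*c) \<ge> 0" using h0 by simp
  ultimately have "a^2 * (c+2) \<le> 0" by (simp add: algebra_simps)
  then have "a^2 \<le> 0" using c0 by (simp add: mult_le_0_iff)
  then have "a = 0" by simp
  then show ?thesis unfolding a_def y_def by simp
qed



lemma psd_CS:
  assumes "psd Y" "e \<bullet> (Y *v e) > 0"
  shows "(e \<bullet> (Y *v x))^2 \<le> (e \<bullet> (Y *v e)) * (x \<bullet> (Y *v x))"
proof -
  define q where "q = e \<bullet> (Y *v e)"
  define p where "p = e \<bullet> (Y *v x)"
  have sy: "sym_mat Y" and qq: "\<And>v. 0 \<le> v \<bullet> (Y *v v)" using assms(1) unfolding psd_def by auto
  have xe: "x \<bullet> (Y *v e) = p" unfolding p_def using sym_inner[OF sy, of x e] by (simp add: inner_commute)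
  define t where "t = p / q"
  have "0 \<le> (x - t *\<^sub>R e) \<bullet> (Y *v (x - t *\<^sub>R e))" by (rule qq)
  also have "\<dots> = x \<bullet> (Y *v x) - t * (x \<bullet> (Y *v e)) - t * (e \<bullet> (Y *v x)) + t*t*(e \<bullet> (Y *v e))"
    by (simp add: matrix_vector_mult_diff_distrib matrix_vector_mult_scaleR inner_diff_left inner_diff_right algebra_simps)
  also have "\<dots> = x \<bullet> (Y *v x) - 2*t*p + t*t*q" using xe unfolding p_def q_def by simp
  finally have h: "0 \<le> x \<bullet> (Y *v x) - 2*t*p + t*t*q" .
  have tq: "t * q = p" unfolding t_def using assms(2) q_def by simp
  have "q * (x \<bullet> (Y *v x) - 2*t*p + t*t*q) = q * (x \<bullet> (Y *v x)) - 2*(t*q)*p + (t*q)*(t*q)"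
    by (simp add: algebra_simps)
  also have "\<dots> = q * (x \<bullet> (Y *v x)) - p^2" unfolding tq by (simp add: power2_eq_square)
  finally have "0 \<le> q * (x \<bullet> (Y *v x)) - p^2" using h assms(2) q_def
    by (metis mult_nonneg_nonneg less_le)
  then show ?thesis unfolding p_def q_def by simp
qed

lemma psd_pair_aux:
  "\<forall>Y. rank Y = r \<longrightarrow> psd S \<longrightarrow> psd Y \<longrightarrow> (0 \<le> S \<bullet> Y \<and> (S \<bullet> Y = 0 \<longrightarrow> S ** Y = 0))"
proof (induction r rule: less_induct)
  case (less r)
  show ?case
  proof (intro allI impI)
    fix Y :: "real^'a^'a" assume rY: "rank Y = r" and pS: "psd S" and pY: "psd Y"
    have sy: "sym_mat Y" and qq: "\<And>v. 0 \<le> v \<bullet> (Y *v v)" using pY unfolding psd_def by auto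
    have sS: "sym_mat S" and qS: "\<And>v. 0 \<le> v \<bullet> (S *v v)" using pS unfolding psd_def by auto
    show "0 \<le> S \<bullet> Y \<and> (S \<bullet> Y = 0 \<longrightarrow> S ** Y = 0)"
    proof (cases "Y = 0")
      case True then show ?thesis by simp
    next
      case False
      obtain e where e: "e \<bullet> (Y *v e) > 0"
      proof (rule ccontr)
        assume "\<not> thesis"
        then have "\<forall>e. e \<bullet> (Y *v e) \<le> 0" using that by (meson not_le)
        then have "\<forall>e. Y *v e = 0" using qq psd_zero_quad[OF pY] by (meson antisym)
        then have "Y = 0" by (simp add: matrix_eq)
        with False show False by simp
      qed
      define q where "q = e \<bullet> (Y *v e)"
      have q0: "q > 0" using e q_def by simp
      define u where "u = Y *v e"
      define Y' where "Y' = Y - (1/q) *\<^sub>R outer u u"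
      have YY: "Y = Y' + (1/q) *\<^sub>R outer u u" unfolding Y'_def by simp
      have ux: "u \<bullet> x = e \<bullet> (Y *v x)" for x
        unfolding u_def using sym_inner[OF sy, of e x] by simp
      have Y'x: "Y' *v x = Y *v x - ((1/q) * (u \<bullet> x)) *\<^sub>R u" for x
        unfolding Y'_def by (simp add: matrix_vector_mult_diff_rdistrib outer_mv scaleR_matrix_vector_assoc[symmetric])
      have symY': "sym_mat Y'"
        using sy unfolding Y'_def sym_mat_iff by (simp add: outer_def mult.commute)
      have "0 \<le> x \<bullet> (Y' *v x)" for x
      proof -
        have "x \<bullet> (Y' *v x) = x \<bullet> (Y *v x) - (1/q) * (u \<bullet> x)^2"
          unfolding Y'x by (simp add: inner_diff_right power2_eq_square inner_commute)
        moreover have "(u \<bullet> x)^2 \<le> q * (x \<bullet> (Y *v x))"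
          unfolding ux q_def by (rule psd_CS[OF pY e])
        ultimately have "0 \<le> q * (x \<bullet> (Y' *v x))" using q0 by (simp add: field_simps)
        then show ?thesis using q0 by (simp add: zero_le_mult_iff)
      qed
      then have pY': "psd Y'" using symY' unfolding psd_def by auto
      have Y'e: "Y' *v e = 0"
        unfolding Y'x using q0 by (simp add: ux q_def u_def inner_commute)
      have sub: "range (\<lambda>x. Y' *v x) \<subseteq> range (\<lambda>x. Y *v x)"
      proof
        fix z assume "z \<in> range (\<lambda>x. Y' *v x)"
        then obtain x where "z = Y' *v x" by auto
        then have "z = Y *v (x - ((1/q) * (u \<bullet> x)) *\<^sub>R e)"
          unfolding Y'x by (simp add: matrix_vector_mult_diff_distrib matrix_vector_mult_scaleR u_def)
        then show "z \<in> range (\<lambda>x. Y *v x)" by auto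
      qed
      have notin: "u \<notin> range (\<lambda>x. Y' *v x)"
      proof
        assume "u \<in> range (\<lambda>x. Y' *v x)"
        then obtain z where z: "u = Y' *v z" by auto
        have "q = e \<bullet> u" unfolding q_def u_def by simp
        also have "\<dots> = (Y' *v e) \<bullet> z" unfolding z using sym_inner[OF symY'] by simp
        finally show False using Y'e q0 by simp
      qed
      have sp1: "subspace (range (\<lambda>x. Y' *v x))"
        by (rule linear_subspace_image) (auto)
      have sp2: "subspace (range (\<lambda>x. Y *v x))"
        by (rule linear_subspace_image) (auto)
      have "span (range (\<lambda>x. Y' *v x)) \<subset> span (range (\<lambda>x. Y *v x))"
      proof -
        have e1: "span (range (\<lambda>x. Y' *v x)) = range (\<lambda>x. Y' *v x)" using sp1 by simp
        have e2: "span (range (\<lambda>x. Y *v x)) = range (\<lambda>x. Y *v x)" using sp2 by simp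
        have "u \<in> range (\<lambda>x. Y *v x)" unfolding u_def by auto
        then show ?thesis unfolding e1 e2 using sub notin by blast
      qed
      then have "rank Y' < rank Y" unfolding rank_dim_range by (rule dim_psubset)
      then have IH: "0 \<le> S \<bullet> Y' \<and> (S \<bullet> Y' = 0 \<longrightarrow> S ** Y' = 0)"
        using less.IH rY pS pY' by blast
      have SY: "S \<bullet> Y = S \<bullet> Y' + (1/q) * (u \<bullet> (S *v u))"
        unfolding YY by (simp add: inner_add_right outer_inner)
      have SuS: "0 \<le> u \<bullet> (S *v u)" by (rule qS)
      have SYm: "S ** Y = S ** Y' + (1/q) *\<^sub>R outer (S *v u) u"
        unfolding YY by (simp add: matrix_add_ldistrib matrix_scalar_ac mm_outer scalar_matrix_assoc[symmetric])
          (simp add: outer_def vec_eq_iff matrix_vector_mult_def sum_distrib_left ac_simps)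
      show ?thesis
      proof
        show "0 \<le> S \<bullet> Y" using SY IH SuS q0 by simp
        show "S \<bullet> Y = 0 \<longrightarrow> S ** Y = 0"
        proof
          assume "S \<bullet> Y = 0"
          moreover have c: "(1/q) * (u \<bullet> (S *v u)) \<ge> 0" using SuS q0 by simp
          ultimately have a: "S \<bullet> Y' = 0" using SY IH by linarith
          then have "(1/q) * (u \<bullet> (S *v u)) = 0" using SY \<open>S \<bullet> Y = 0\<close> by linarith
          then have b: "u \<bullet> (S *v u) = 0" using q0 by simp
          have "S *v u = 0" using psd_zero_quad[OF pS b] .
          then show "S ** Y = 0" using SYm IH a by (simp add: outer_def vec_eq_iff)
        qed
      qed
    qed
  qed
qed

lemma psd_inner_nonneg: "psd S \<Longrightarrow> psd Y \<Longrightarrow> 0 \<le> S \<bullet> Y"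
  using psd_pair_aux by blast

lemma psd_inner_zero: "psd S \<Longrightarrow> psd Y \<Longrightarrow> S \<bullet> Y = 0 \<Longrightarrow> S ** Y = 0"
  using psd_pair_aux by blast



abbreviation "PSD \<equiv> {X::real^'n^'n. psd X}"

lemma closed_PSD: "closed PSD"
proof -
  have "PSD = {X::real^'n^'n. (\<forall>i j. X$i$j = X$j$i) \<and> (\<forall>v. 0 \<le> v \<bullet> (X *v v))}"
    unfolding psd_def sym_mat_iff by auto
  also have "closed \<dots>"
    unfolding matrix_vector_mult_def inner_vec_def
    by (intro closed_Collect_conj closed_Collect_all closed_Collect_eq closed_Collect_le continuous_intros)
  finally show ?thesis .
qed

lemma psd_0: "psd 0"
  by (simp add: psd_def sym_mat_iff)

lemma psd_add: "psd X \<Longrightarrow> psd Y \<Longrightarrow> psd (X + Y)"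
  by (auto simp: psd_def sym_mat_iff matrix_vector_mult_add_rdistrib inner_add_right add_nonneg_nonneg)

lemma psd_scale: "psd X \<Longrightarrow> c \<ge> 0 \<Longrightarrow> psd (c *\<^sub>R X)"
  by (auto simp: psd_def sym_mat_iff scaleR_matrix_vector_assoc[symmetric])

lemma psd_outer: "psd (outer v v)"
  unfolding psd_def using sym_outer by (simp add: outer_mv inner_commute)

lemma convex_PSD: "convex PSD"
  unfolding convex_def using psd_add psd_scale by auto

lemma PSD_ne: "PSD \<noteq> {}" using psd_0 by auto

lemma psd_proj_cp: "psd_proj Z = closest_point PSD Z"
  unfolding psd_proj_def
proof (rule the_equality)
  show "psd (closest_point PSD Z) \<and> (\<forall>Y. psd Y \<longrightarrow> norm (Z - closest_point PSD Z) \<le> norm (Z - Y))"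
    using closest_point_exists[OF closed_PSD PSD_ne, of Z] by (auto simp: dist_norm)
  fix X assume X: "psd X \<and> (\<forall>Y. psd Y \<longrightarrow> norm (Z - X) \<le> norm (Z - Y))"
  show "X = closest_point PSD Z"
    by (rule closest_point_unique[OF convex_PSD closed_PSD]) (use X in \<open>auto simp: dist_norm\<close>)
qed

lemma psd_proj_psd: "psd (psd_proj Z)"
  unfolding psd_proj_cp using closest_point_exists[OF closed_PSD PSD_ne] by auto

lemma psd_proj_dot: "psd Y \<Longrightarrow> (Z - psd_proj Z) \<bullet> (Y - psd_proj Z) \<le> 0"
  unfolding psd_proj_cp by (rule closest_point_dot[OF convex_PSD closed_PSD]) auto

lemma psd_proj_char:
  fixes X :: "real^'n^'n"
  assumes X: "psd X" and h: "\<And>Y::real^'n^'n. psd Y \<Longrightarrow> (Z - X) \<bullet> (Y - X) \<le> 0"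
  shows "psd_proj Z = X"
proof -
  have "X = closest_point PSD Z"
  proof (rule closest_point_unique[OF convex_PSD closed_PSD])
    show "X \<in> PSD" using X by simp
    show "\<forall>Y\<in>PSD. dist Z X \<le> dist Z Y"
    proof
      fix Y :: "real^'n^'n" assume "Y \<in> PSD"
      then have hY: "(Z - X) \<bullet> (Y - X) \<le> 0" using h by simp
      have "(norm (Z - Y))^2 = (norm (Z - X))^2 - 2 * ((Z - X) \<bullet> (Y - X)) + (norm (Y - X))^2"
        by (simp add: power2_norm_eq_inner inner_diff_left inner_diff_right inner_commute algebra_simps)
      moreover have "0 \<le> (norm (Y - X))^2" by simp
      ultimately have "(norm (Z - X))^2 \<le> (norm (Z - Y))^2" using hY by linarith
      then show "dist Z X \<le> dist Z Y" by (simp add: dist_norm power_mono_iff)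
    qed
  qed
  then show ?thesis by (simp add: psd_proj_cp)
qed

lemma psd_proj_lip: "dist (psd_proj Z) (psd_proj Z') \<le> dist Z Z'"
  unfolding psd_proj_cp by (rule closest_point_lipschitz[OF convex_PSD closed_PSD PSD_ne])



lemma mv_norm_bound:
  fixes A :: "real^'n^'m"
  shows "norm (A *v x) \<le> (real CARD('m) * real CARD('n) * norm A) * norm x"
proof -
  have "norm (A *v x) \<le> onorm ((*v) A) * norm x"
    by (rule onorm[OF matrix_vector_mul_bounded_linear])
  also have "onorm ((*v) A) \<le> (\<Sum>i\<in>UNIV. \<Sum>j\<in>UNIV. \<bar>A $ i $ j\<bar>)"
    by (rule onorm_le_matrix_component_sum)
  also have "\<dots> \<le> (\<Sum>i\<in>(UNIV::'m set). \<Sum>j\<in>(UNIV::'n set). norm A)"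
  proof (intro sum_mono)
    fix i j
    have "\<bar>A $ i $ j\<bar> \<le> norm (A $ i)" by (rule component_le_norm_cart)
    also have "\<dots> \<le> norm A" by (rule Finite_Cartesian_Product.norm_nth_le)
    finally show "\<bar>A $ i $ j\<bar> \<le> norm A" .
  qed
  also have "\<dots> = real CARD('m) * real CARD('n) * norm A" by simp
  finally show ?thesis by (simp add: mult_right_mono)
qed

lemma rank_lsc:
  fixes M :: "real^'n^'n" and Mk :: "nat \<Rightarrow> real^'n^'n"
  assumes sM: "sym_mat M" and lim: "Mk \<longlonglongrightarrow> M"
  shows "\<forall>\<^sub>F k in sequentially. rank M \<le> rank (Mk k)"
proof (cases "M = 0")
  case True then show ?thesis by simp
next
  case False
  define V where "V = range (\<lambda>x. M *v x)"
  have subV: "subspace V" unfolding V_def by (rule linear_subspace_image) auto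
  have inj0: "M *v v \<noteq> 0" if vV: "v \<in> V" and vnz: "v \<noteq> 0" for v
  proof
    assume Mv: "M *v v = 0"
    obtain w where w: "v = M *v w" using vV unfolding V_def by auto
    have "v \<bullet> v = w \<bullet> (M *v v)" using sym_inner[OF sM, of w v] w by (simp add: inner_commute)
    then show False using Mv vnz by simp
  qed
  define T where "T = V \<inter> sphere 0 1"
  have cT: "compact T" unfolding T_def
    by (intro closed_Int_compact closed_subspace subV compact_sphere)
  obtain x where "M *v x \<noteq> 0" using False by (metis matrix_eq matrix_vector_mult_0)
  then have "(1/norm (M *v x)) *\<^sub>R (M *v x) \<in> T"
    unfolding T_def V_def using subV
    by (auto simp: V_def intro!: subspace_scale)
  then have neT: "T \<noteq> {}" by auto
  have "continuous_on T (\<lambda>v. norm (M *v v))"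
    by (intro continuous_intros linear_continuous_on matrix_vector_mul_bounded_linear)
  then obtain v0 where v0: "v0 \<in> T" and vmin: "\<And>v. v \<in> T \<Longrightarrow> norm (M *v v0) \<le> norm (M *v v)"
    using continuous_attains_inf[OF cT neT] by blast
  define c where "c = norm (M *v v0)"
  have c0: "c > 0" unfolding c_def using v0 inj0[of v0] unfolding T_def by fastforce
  have lower: "c * norm v \<le> norm (M *v v)" if "v \<in> V" for v
  proof (cases "v = 0")
    case True then show ?thesis by simp
  next
    case False
    have "(1/norm v) *\<^sub>R v \<in> T" unfolding T_def using that False subV
      by (auto intro: subspace_scale)
    then have "c \<le> norm (M *v ((1/norm v) *\<^sub>R v))" unfolding c_def by (rule vmin)
    also have "\<dots> = norm (M *v v) / norm v" by (simp add: matrix_vector_mult_scaleR)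
    finally show ?thesis using False by (simp add: field_simps)
  qed
  define B where "B = real CARD('n) * real CARD('n)"
  have B0: "B > 0" unfolding B_def by simp
  have "\<forall>\<^sub>F k in sequentially. dist (Mk k) M < c / B"
    using lim c0 B0 by (simp add: tendsto_iff)
  then show ?thesis
  proof (rule eventually_mono)
    fix k assume dk: "dist (Mk k) M < c / B"
    have inj: "inj_on (\<lambda>x. Mk k *v x) V"
    proof (subst linear_inj_on_iff_eq_0[OF _ subV])
      show "linear (\<lambda>x. Mk k *v x)" by simp
      show "\<forall>v\<in>V. Mk k *v v = 0 \<longrightarrow> v = 0"
      proof (intro ballI impI, rule ccontr)
        fix v assume vV: "v \<in> V" and z: "Mk k *v v = 0" and nz: "v \<noteq> 0"
        have "M *v v = (M - Mk k) *v v" using z by (simp add: matrix_vector_mult_diff_rdistrib)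
        then have "norm (M *v v) \<le> (B * norm (M - Mk k)) * norm v"
          using mv_norm_bound[of "M - Mk k" v] unfolding B_def by simp
        also have "\<dots> < c * norm v"
        proof -
          have "B * norm (M - Mk k) < c" using dk B0 by (simp add: dist_norm norm_minus_commute field_simps)
          then show ?thesis using nz by simp
        qed
        finally show False using lower[OF vV] by simp
      qed
    qed
    have "rank M = dim V" unfolding V_def rank_dim_range by simp
    also have "\<dots> = dim ((\<lambda>x. Mk k *v x) ` V)"
    proof (rule dim_image_eq[symmetric])
      have sV: "span V = V" using subV by simp
      show "inj_on (\<lambda>x. Mk k *v x) (span V)" unfolding sV by (rule inj)
    qed simp
    also have "\<dots> \<le> dim (range (\<lambda>x. Mk k *v x))" by (rule dim_subset) auto
    also have "\<dots> = rank (Mk k)" by (simp add: rank_dim_range)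
    finally show "rank M \<le> rank (Mk k)" .
  qed
qed



lemma sym_add: "sym_mat X \<Longrightarrow> sym_mat Y \<Longrightarrow> sym_mat (X + Y)"
  by (simp add: sym_mat_iff)
lemma sym_diff: "sym_mat X \<Longrightarrow> sym_mat Y \<Longrightarrow> sym_mat (X - Y)"
  by (simp add: sym_mat_iff)
lemma sym_scale: "sym_mat X \<Longrightarrow> sym_mat (c *\<^sub>R X)"
  by (simp add: sym_mat_iff)
lemma sym_sum: "(\<And>i. i \<in> I \<Longrightarrow> sym_mat (f i)) \<Longrightarrow> sym_mat (sum f I)"
  by (induction I rule: infinite_finite_induct) (auto simp: sym_add sym_mat_iff)

lemma sym_Aadj: "(\<And>i. sym_mat (A i)) \<Longrightarrow> sym_mat (Aadj A y)"
  unfolding Aadj_def by (intro sym_sum sym_scale) auto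

lemma sym_admm_step:
  assumes "\<And>i. sym_mat (A i)" "sym_mat C" "sym_mat Z"
  shows "sym_mat (admm_step A b C \<sigma> Z)"
  unfolding admm_step_def Pproj_def
  using assms psd_proj_psd[of Z] unfolding psd_def
  by (intro sym_add sym_diff sym_scale sym_Aadj) auto

lemma rank_scale_le:
  fixes M :: "real^'n^'m"
  shows "rank (c *\<^sub>R M) \<le> rank M"
proof -
  have "range (\<lambda>x. (c *\<^sub>R M) *v x) = (\<lambda>y. c *\<^sub>R y) ` range (\<lambda>x. M *v x)"
    by (auto simp: scaleR_matrix_vector_assoc[symmetric])
  then have "rank (c *\<^sub>R M) = dim ((\<lambda>y. c *\<^sub>R y) ` range (\<lambda>x. M *v x))"
    by (simp add: rank_dim_range)
  also have "\<dots> \<le> dim (range (\<lambda>x. M *v x))"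
    by (rule dim_image_le) (simp add: linear_scaleR)
  finally show ?thesis by (simp add: rank_dim_range)
qed

lemma rank_scale:
  fixes M :: "real^'n^'m"
  assumes "c \<noteq> 0" shows "rank (c *\<^sub>R M) = rank M"
proof -
  have "rank M = rank (inverse c *\<^sub>R (c *\<^sub>R M))" using assms by simp
  also have "\<dots> \<le> rank (c *\<^sub>R M)" by (rule rank_scale_le)
  finally show ?thesis using rank_scale_le[of c M] by simp
qed

lemma moreau_rank:
  fixes Z :: "real^'n^'n"
  assumes sZ: "sym_mat Z"
  shows "rank (psd_proj Z) + rank (psd_proj (-Z)) \<le> CARD('n)"
proof -
  define P where "P = psd_proj Z"
  define W where "W = P - Z"
  have pP: "psd P" unfolding P_def by (rule psd_proj_psd)
  have sP: "sym_mat P" using pP unfolding psd_def by simp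
  have sW: "sym_mat W" unfolding W_def using sP sZ by (rule sym_diff)
  have dot: "\<And>Y. psd Y \<Longrightarrow> (Z - P) \<bullet> (Y - P) \<le> 0" unfolding P_def by (rule psd_proj_dot)
  have "0 \<le> v \<bullet> (W *v v)" for v
  proof -
    have "(Z - P) \<bullet> ((P + outer v v) - P) \<le> 0" by (rule dot) (intro psd_add pP psd_outer)
    then have "0 \<le> W \<bullet> outer v v" unfolding W_def by (simp add: inner_diff_left)
    then show ?thesis by (simp add: outer_inner)
  qed
  then have pW: "psd W" using sW unfolding psd_def by simp
  have "(Z - P) \<bullet> (0 - P) \<le> 0" by (rule dot) (rule psd_0)
  moreover have "(Z - P) \<bullet> (2 *\<^sub>R P - P) \<le> 0" by (rule dot) (intro psd_scale pP, simp)
  ultimately have WP: "W \<bullet> P = 0" unfolding W_def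
    by (simp add: inner_diff_left inner_diff_right scaleR_2 inner_add_right algebra_simps)
  have WP0: "W ** P = 0" by (rule psd_inner_zero[OF pW pP WP])
  have PW0: "P ** W = 0"
  proof -
    have "transpose (W ** P) = P ** W" using sP sW unfolding sym_mat_def by (simp add: matrix_transpose_mul)
    moreover have "transpose (0::real^'n^'n) = 0" by (simp add: transpose_def vec_eq_iff)
    ultimately show ?thesis using WP0 by simp
  qed
  have projW: "psd_proj (-Z) = W"
  proof (rule psd_proj_char[OF pW])
    fix Y :: "real^'n^'n" assume pY: "psd Y"
    have "(- Z - W) = - P" unfolding W_def by simp
    then have "(- Z - W) \<bullet> (Y - W) = - (P \<bullet> Y) + P \<bullet> W" by (simp add: inner_diff_right)
    also have "P \<bullet> W = 0" using WP by (simp add: inner_commute)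
    finally show "(- Z - W) \<bullet> (Y - W) \<le> 0" using psd_inner_nonneg[OF pP pY] by simp
  qed
  have orth: "x \<bullet> y = 0" if xin: "x \<in> range (\<lambda>a. P *v a)" and yin: "y \<in> range (\<lambda>b. W *v b)" for x y
  proof -
    obtain a b where ab: "x = P *v a" "y = W *v b" using xin yin by auto
    have "x \<bullet> y = a \<bullet> (P *v (W *v b))" unfolding ab using sym_inner[OF sP, of a "W *v b"] by simp
    also have "\<dots> = 0" by (simp add: matrix_vector_mul_assoc PW0)
    finally show ?thesis .
  qed
  have "rank P + rank W = dim (range (\<lambda>a. P *v a) \<union> range (\<lambda>b. W *v b))"
    unfolding rank_dim_range by (rule dim_orthogonal_sum[symmetric]) (rule orth)
  also have "\<dots> \<le> CARD('n)" by (rule dim_subset_UNIV_cart)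
  finally show ?thesis unfolding P_def[symmetric] projW .
qed



theorem proposition3:
  fixes A :: "'m::finite \<Rightarrow> real^'n^'n" and b :: "real^'m" and C :: "real^'n^'n"
    and \<sigma> :: real and Z :: "nat \<Rightarrow> real^'n^'n"
    and Xs :: "real^'n^'n" and ys :: "real^'m" and Ss :: "real^'n^'n"
  assumes symA: "\<And>i. sym_mat (A i)" and symC: "sym_mat C"
    and surjA: "\<forall>c. \<exists>X. sym_mat X \<and> Aop A X = c"
    and sigma_pos: "\<sigma> > 0"
    and Z0: "sym_mat (Z 0)"
    and iter: "\<And>k. Z (Suc k) = admm_step A b C \<sigma> (Z k)"
    and kkt: "is_KKT A b C Xs ys Ss"
    and conv: "Z \<longlonglongrightarrow> Xs - \<sigma> *\<^sub>R Ss"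
    and strict: "rank Xs + rank Ss = CARD('n)"
  shows "\<exists>kID::nat. \<forall>k\<ge>kID. rank (admm_X (Z k)) = rank Xs \<and> rank (admm_S \<sigma> (Z k)) = rank Ss"
proof -
  have pX: "psd Xs" and pS: "psd Ss" and tr: "trace (Xs ** Ss) = 0"
    using kkt unfolding is_KKT_def by auto
  have sX: "sym_mat Xs" and sS: "sym_mat Ss" using pX pS unfolding psd_def by auto
  have XS: "Xs \<bullet> Ss = 0" using tr trace_inner[OF sS] by simp
  have symZ: "sym_mat (Z k)" for k
    by (induction k) (use Z0 in simp, simp add: iter sym_admm_step symA symC)
  define Zs where "Zs = Xs - \<sigma> *\<^sub>R Ss"
  have projX: "psd_proj Zs = Xs"
  proof (rule psd_proj_char[OF pX])
    fix Y :: "real^'n^'n" assume pY: "psd Y"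
    have "(Zs - Xs) \<bullet> (Y - Xs) = - \<sigma> * (Ss \<bullet> Y) + \<sigma> * (Ss \<bullet> Xs)"
      unfolding Zs_def by (simp add: inner_diff_right algebra_simps)
    also have "Ss \<bullet> Xs = 0" using XS by (simp add: inner_commute)
    finally show "(Zs - Xs) \<bullet> (Y - Xs) \<le> 0"
      using psd_inner_nonneg[OF pS pY] sigma_pos by simp
  qed
  have projS: "psd_proj (- Zs) = \<sigma> *\<^sub>R Ss"
  proof (rule psd_proj_char)
    show "psd (\<sigma> *\<^sub>R Ss)" using pS sigma_pos by (simp add: psd_scale)
    fix Y :: "real^'n^'n" assume pY: "psd Y"
    have "(- Zs - \<sigma> *\<^sub>R Ss) \<bullet> (Y - \<sigma> *\<^sub>R Ss) = - (Xs \<bullet> Y) + \<sigma> * (Xs \<bullet> Ss)"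
      unfolding Zs_def by (simp add: inner_diff_right algebra_simps)
    then show "(- Zs - \<sigma> *\<^sub>R Ss) \<bullet> (Y - \<sigma> *\<^sub>R Ss) \<le> 0"
      using psd_inner_nonneg[OF pX pY] XS by simp
  qed
  have pc: "psd_proj = closest_point PSD" by (rule ext) (rule psd_proj_cp)
  have cont: "isCont psd_proj x" for x :: "real^'n^'n"
    unfolding pc by (rule continuous_at_closest_point[OF convex_PSD closed_PSD PSD_ne])
  have Zc: "Z \<longlonglongrightarrow> Zs" using conv unfolding Zs_def .
  have l1: "(\<lambda>k. admm_X (Z k)) \<longlonglongrightarrow> Xs"
    unfolding admm_X_def using isCont_tendsto_compose[OF cont Zc] projX by simp
  have "(\<lambda>k. psd_proj (- Z k)) \<longlonglongrightarrow> \<sigma> *\<^sub>R Ss"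
    using isCont_tendsto_compose[OF cont tendsto_minus[OF Zc]] projS by simp
  then have "(\<lambda>k. inverse \<sigma> *\<^sub>R psd_proj (- Z k)) \<longlonglongrightarrow> inverse \<sigma> *\<^sub>R (\<sigma> *\<^sub>R Ss)"
    by (intro tendsto_scaleR tendsto_const)
  then have l2: "(\<lambda>k. admm_S \<sigma> (Z k)) \<longlonglongrightarrow> Ss"
    unfolding admm_S_def using sigma_pos by simp
  have e1: "\<forall>\<^sub>F k in sequentially. rank Xs \<le> rank (admm_X (Z k))"
    by (rule rank_lsc[OF sX l1])
  have e2: "\<forall>\<^sub>F k in sequentially. rank Ss \<le> rank (admm_S \<sigma> (Z k))"
    by (rule rank_lsc[OF sS l2])
  have up: "rank (admm_X (Z k)) + rank (admm_S \<sigma> (Z k)) \<le> CARD('n)" for k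
  proof -
    have "rank (admm_S \<sigma> (Z k)) = rank (psd_proj (- Z k))"
      unfolding admm_S_def using sigma_pos by (simp add: rank_scale)
    then show ?thesis unfolding admm_X_def using moreau_rank[OF symZ[of k]] by simp
  qed
  obtain N where N: "\<And>k. k \<ge> N \<Longrightarrow> rank Xs \<le> rank (admm_X (Z k)) \<and> rank Ss \<le> rank (admm_S \<sigma> (Z k))"
    using eventually_conj[OF e1 e2] unfolding eventually_sequentially by blast
  show ?thesis
  proof (intro exI allI impI)
    fix k assume "N \<le> k"
    then show "rank (admm_X (Z k)) = rank Xs \<and> rank (admm_S \<sigma> (Z k)) = rank Ss"
      using N[of k] up[of k] strict by linarith
  qed
qed

end
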